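(* Let $(X,T)$ be a dynamical system. Then for every $\delta>0$ the family $\mathcal{S}_T(\delta)$ is $+$ invariant. Furthermore, the following are equivalent: (1) $(X,T)$ is transitively sensitive; (2) there exist $\delta>0$ and a dense $G_\delta$ subset $X_0\subset X$ such that $\omega_{\mathcal{S}_T(\delta)}(x)=X$ for each $x\in X_0$; (3) there exist $\delta>0$ and $x\in X$ with $\omega_{\mathcal{S}_T(\delta)}(x)=X$.
   Context: A dynamical system $(X,T)$: $X$ is a compact metric space (metric $d$) with more than one point and without isolated points, $T:X\to X$ a continuous surjection. "Opene" means open and nonempty. $S_T(U,\delta)=\{n\in\mathbb{Z}_+:\exists x_1,x_2\in U,\ d(T^nx_1,T^nx_2)>\delta\}$, $N_T(U,V)=\{n\in\mathbb{Z}_+:U\cap T^{-n}V\neq\varnothing\}$. $\mathcal{S}_T(\delta)$ is the family of all subsets of $\mathbb{Z}_+$ containing $S_T(U,\delta)$ for some opene $U$. For a family $\mathcal{F}$, $\omega_{\mathcal{F}}(x)=\bigcap_{F\in\mathcal{F}}\overline{\{T^ix:i\in F\}}$. A family $\mathcal{F}$ is $+$ invariant if for every $i\in\mathbb{Z}_+$, $F\in\mathcal{F}$ implies $\{i+j:j\in F\}\in\mathcal{F}$. $(X,T)$ is transitively sensitive if there is $\delta>0$ with $S_T(W,\delta)\cap N_T(U,V)\neq\varnothing$ for all opene $U,V,W\subset X$. *)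

theory Defs
  imports "HOL-Analysis.Analysis"
begin

text \<open>Dynamical system (X,T): X a compact subset of a metric space type, T continuous
  surjection of X onto itself. Z_+ is rendered as nat. "Opene" = open in X and nonempty.\<close>

definition opene :: "'a::metric_space set \<Rightarrow> 'a set \<Rightarrow> bool" where
  "opene X U \<longleftrightarrow> openin (top_of_set X) U \<and> U \<noteq> {}"

definition S_T :: "('a::metric_space \<Rightarrow> 'a) \<Rightarrow> 'a set \<Rightarrow> real \<Rightarrow> nat set" where
  "S_T T U \<delta> = {n. \<exists>x1\<in>U. \<exists>x2\<in>U. dist ((T ^^ n) x1) ((T ^^ n) x2) > \<delta>}"

definition N_T :: "('a \<Rightarrow> 'a) \<Rightarrow> 'a set \<Rightarrow> 'a set \<Rightarrow> nat set" where
  "N_T T U V = {n. U \<inter> (T ^^ n) -` V \<noteq> {}}"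

definition S_fam :: "'a::metric_space set \<Rightarrow> ('a \<Rightarrow> 'a) \<Rightarrow> real \<Rightarrow> nat set set" where
  "S_fam X T \<delta> = {F. \<exists>U. opene X U \<and> S_T T U \<delta> \<subseteq> F}"

definition omega_F :: "('a::topological_space \<Rightarrow> 'a) \<Rightarrow> nat set set \<Rightarrow> 'a \<Rightarrow> 'a set" where
  "omega_F T \<F> x = (\<Inter>F\<in>\<F>. closure {(T ^^ i) x | i. i \<in> F})"

definition plus_invariant :: "nat set set \<Rightarrow> bool" where
  "plus_invariant \<F> \<longleftrightarrow> (\<forall>i F. F \<in> \<F> \<longrightarrow> (\<lambda>j. i + j) ` F \<in> \<F>)"

definition transitively_sensitive :: "'a::metric_space set \<Rightarrow> ('a \<Rightarrow> 'a) \<Rightarrow> bool" where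
  "transitively_sensitive X T \<longleftrightarrow> (\<exists>\<delta>>0. \<forall>U V W. opene X U \<longrightarrow> opene X V \<longrightarrow> opene X W \<longrightarrow>
      S_T T W \<delta> \<inter> N_T T U V \<noteq> {})"

end

theory Submission
  imports Defs
begin

lemma funpow_image: "T ` X = X \<Longrightarrow> (T^^n) ` X = X"
proof (induction n)
  case (Suc n)
  have "(T^^Suc n) ` X = T ` ((T^^n) ` X)" by (simp add: image_image)
  then show ?case using Suc by simp
qed simp

lemma funpow_in: "T ` X = X \<Longrightarrow> x \<in> X \<Longrightarrow> (T^^n) x \<in> X"
  using funpow_image by blast

lemma funpow_cont: "continuous_on X T \<Longrightarrow> T ` X = X \<Longrightarrow> continuous_on X (T^^n)"
proof (induction n)
  case 0 then show ?case by (simp add: continuous_on_id)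
next
  case (Suc n)
  have "continuous_on ((T^^n) ` X) T" using Suc funpow_image by metis
  then show ?case using Suc continuous_on_compose[of X "T^^n" T] by simp
qed

lemma funpow_openin:
  assumes "continuous_on X T" "T ` X = X" "openin (top_of_set X) V"
  shows "openin (top_of_set X) (X \<inter> (T^^n) -` V)"
  using continuous_openin_preimage[OF funpow_cont[OF assms(1,2)] _ assms(3)]
    funpow_image[OF assms(2)] by blast

lemma funpow_openin_open:
  assumes "continuous_on X T" "T ` X = X" "open Q"
  shows "openin (top_of_set X) (X \<inter> (T^^n) -` Q)"
  using continuous_openin_preimage_gen[OF funpow_cont[OF assms(1,2)] assms(3)] .

lemma shift:
  assumes cT: "continuous_on X T" and sT: "T ` X = X" and W: "opene X W" and d: "\<delta> > 0"
  shows "\<exists>W'. opene X W' \<and> S_T T W' \<delta> \<subseteq> (\<lambda>j. i + j) ` S_T T W \<delta>"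
proof -
  from W obtain w where w: "w \<in> W" and Wo: "openin (top_of_set X) W" by (auto simp: opene_def)
  have WX: "W \<subseteq> X" using Wo by (rule openin_imp_subset)
  obtain x0 where x0: "x0 \<in> X" "(T^^i) x0 = w" using funpow_image[OF sT, of i] w WX by force
  define A where "A k = {x\<in>X. \<forall>j<k. dist ((T^^j) x) ((T^^j) x0) < \<delta>/2}" for k
  have Aopen: "openin (top_of_set X) (A k)" for k
  proof (induction k)
    case 0
    have "A 0 = X" by (simp add: A_def)
    then show ?case by simp
  next
    case (Suc k)
    have "A (Suc k) = A k \<inter> (X \<inter> (T^^k) -` ball ((T^^k) x0) (\<delta>/2))"
      by (auto simp: A_def less_Suc_eq dist_commute)
    then show ?case using Suc funpow_openin_open[OF cT sT, of "ball ((T^^k) x0) (\<delta>/2)" k]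
      by (simp add: openin_Int)
  qed
  define W' where "W' = A i \<inter> (X \<inter> (T^^i) -` W)"
  have "opene X W'"
    unfolding opene_def W'_def
    using Aopen[of i] funpow_openin[OF cT sT Wo, of i] x0 w d
    by (auto simp: openin_Int A_def)
  moreover have "S_T T W' \<delta> \<subseteq> (\<lambda>j. i + j) ` S_T T W \<delta>"
  proof
    fix n assume "n \<in> S_T T W' \<delta>"
    then obtain x1 x2 where x: "x1 \<in> W'" "x2 \<in> W'" "dist ((T^^n) x1) ((T^^n) x2) > \<delta>"
      by (auto simp: S_T_def)
    have "\<not> n < i"
    proof
      assume "n < i"
      then have "dist ((T^^n) x1) ((T^^n) x0) < \<delta>/2" "dist ((T^^n) x2) ((T^^n) x0) < \<delta>/2"
        using x by (auto simp: W'_def A_def)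
      then have "dist ((T^^n) x1) ((T^^n) x2) < \<delta>" by (rule dist_triangle_half_l)
      with x show False by simp
    qed
    then have ni: "n = (n - i) + i" by simp
    have eq: "(T^^n) y = (T^^(n-i)) ((T^^i) y)" for y
      by (subst ni) (simp add: funpow_add)
    have "(T^^i) x1 \<in> W" "(T^^i) x2 \<in> W" using x by (auto simp: W'_def)
    then have "n - i \<in> S_T T W \<delta>" using x(3) unfolding S_T_def eq by blast
    then show "n \<in> (\<lambda>j. i + j) ` S_T T W \<delta>" using ni by (auto intro!: image_eqI[where x="n-i"])
  qed
  ultimately show ?thesis by blast
qed

lemma omega_iff:
  assumes cX: "compact X" and sT: "T ` X = X" and x: "x \<in> X"
  shows "omega_F T (S_fam X T \<delta>) x = X \<longleftrightarrow>
    (\<forall>W V. opene X W \<longrightarrow> opene X V \<longrightarrow> (\<exists>i\<in>S_T T W \<delta>. (T^^i) x \<in> V))"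
proof
  assume om: "omega_F T (S_fam X T \<delta>) x = X"
  show "\<forall>W V. opene X W \<longrightarrow> opene X V \<longrightarrow> (\<exists>i\<in>S_T T W \<delta>. (T^^i) x \<in> V)"
  proof (intro allI impI)
    fix W V assume W: "opene X W" and V: "opene X V"
    then obtain v where v: "v \<in> V" and Vo: "openin (top_of_set X) V" by (auto simp: opene_def)
    obtain Q where O: "open Q" "V = X \<inter> Q" using Vo by (auto simp: openin_open)
    have "S_T T W \<delta> \<in> S_fam X T \<delta>" using W by (auto simp: S_fam_def)
    moreover have "v \<in> omega_F T (S_fam X T \<delta>) x" using om v O by auto
    ultimately have vc: "v \<in> closure {(T ^^ i) x | i. i \<in> S_T T W \<delta>}"
      unfolding omega_F_def by blast
    obtain e where e: "e > 0" "ball v e \<subseteq> Q" using O v open_contains_ball by blast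
    obtain y where y: "y \<in> {(T ^^ i) x | i. i \<in> S_T T W \<delta>}" "dist y v < e"
      using vc e(1) closure_approachable by blast
    then obtain i where i: "i \<in> S_T T W \<delta>" "y = (T^^i) x" by blast
    have "y \<in> Q" using e y by (auto simp: dist_commute)
    moreover have "y \<in> X" using i funpow_in[OF sT x] by simp
    ultimately show "\<exists>i\<in>S_T T W \<delta>. (T^^i) x \<in> V" using i O by blast
  qed
next
  assume good: "\<forall>W V. opene X W \<longrightarrow> opene X V \<longrightarrow> (\<exists>i\<in>S_T T W \<delta>. (T^^i) x \<in> V)"
  show "omega_F T (S_fam X T \<delta>) x = X"
  proof
    have "opene X X" using x by (auto simp: opene_def)
    then have "S_T T X \<delta> \<in> S_fam X T \<delta>" by (auto simp: S_fam_def)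
    then have "omega_F T (S_fam X T \<delta>) x \<subseteq> closure {(T ^^ i) x | i. i \<in> S_T T X \<delta>}"
      unfolding omega_F_def by blast
    also have "\<dots> \<subseteq> closure X" using funpow_in[OF sT x] by (intro closure_mono) auto
    also have "\<dots> = X" using cX by (simp add: compact_imp_closed)
    finally show "omega_F T (S_fam X T \<delta>) x \<subseteq> X" .
  next
    show "X \<subseteq> omega_F T (S_fam X T \<delta>) x"
    proof
      fix y assume y: "y \<in> X"
      show "y \<in> omega_F T (S_fam X T \<delta>) x"
        unfolding omega_F_def
      proof
        fix F assume "F \<in> S_fam X T \<delta>"
        then obtain U where U: "opene X U" "S_T T U \<delta> \<subseteq> F" by (auto simp: S_fam_def)
        show "y \<in> closure {(T ^^ i) x | i. i \<in> F}"
          unfolding closure_approachable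
        proof (intro allI impI)
          fix e :: real assume e: "e > 0"
          have "opene X (X \<inter> ball y e)" using y e by (auto simp: opene_def openin_open_Int)
          then obtain i where i: "i \<in> S_T T U \<delta>" "(T^^i) x \<in> X \<inter> ball y e" using good U by blast
          then have "(T^^i) x \<in> {(T ^^ i) x | i. i \<in> F}" using U by blast
          moreover have "dist ((T^^i) x) y < e" using i by (auto simp: dist_commute)
          ultimately show "\<exists>z\<in>{(T ^^ i) x | i. i \<in> F}. dist z y < e" by blast
        qed
      qed
    qed
  qed
qed

lemma ts_imp_dense:
  assumes cX: "compact X" and cT: "continuous_on X T" and sT: "T ` X = X" and ne: "X \<noteq> {}"
    and ts: "\<forall>U V W. opene X U \<longrightarrow> opene X V \<longrightarrow> opene X W \<longrightarrow> S_T T W \<delta> \<inter> N_T T U V \<noteq> {}"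
  shows "\<exists>X0. X0 \<subseteq> X \<and> X \<subseteq> closure X0 \<and> gdelta_in (top_of_set X) X0
     \<and> (\<forall>x\<in>X0. \<forall>W V. opene X W \<longrightarrow> opene X V \<longrightarrow> (\<exists>i\<in>S_T T W \<delta>. (T^^i) x \<in> V))"
proof -
  have "\<exists>K. finite K \<and> K \<subseteq> X \<and> X \<subseteq> (\<Union>c\<in>K. ball c (1 / real (Suc m)))" for m :: nat
  proof -
    have "X \<subseteq> (\<Union>c\<in>X. ball c (1 / real (Suc m)))" by force
    then obtain C' where "C' \<subseteq> X" "finite C'" "X \<subseteq> (\<Union>c\<in>C'. ball c (1 / real (Suc m)))"
      using compactE_image[OF cX, of X "\<lambda>c. ball c (1 / real (Suc m))"] by auto
    then show ?thesis by blast
  qed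
  then obtain K where K: "\<And>m. finite (K m) \<and> K m \<subseteq> X \<and> X \<subseteq> (\<Union>c\<in>K m. ball c (1 / real (Suc m)))"
    by metis
  define B where "B = (\<Union>m. (\<lambda>c. X \<inter> ball c (1 / real (Suc m))) ` K m)"
  have cB: "countable B" unfolding B_def using K by (intro countable_UN) (auto intro: countable_finite)
  have Bop: "opene X b" if "b \<in> B" for b
  proof -
    from that obtain m c where c: "c \<in> K m" "b = X \<inter> ball c (1 / real (Suc m))"
      unfolding B_def by blast
    have "c \<in> X" using c K by blast
    then have "c \<in> b" using c by simp
    then show ?thesis using c by (auto simp: opene_def openin_open_Int)
  qed
  have Bbase: "\<exists>b\<in>B. b \<subseteq> W" if W: "opene X W" for W
  proof -
    from W obtain w where w: "w \<in> W" and Wo: "openin (top_of_set X) W" by (auto simp: opene_def)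
    obtain Q where Q: "open Q" "W = X \<inter> Q" using Wo by (auto simp: openin_open)
    obtain r where r: "r > 0" "ball w r \<subseteq> Q" using Q w open_contains_ball by blast
    obtain m :: nat where m: "1 / real (Suc m) < r / 2"
    proof -
      from reals_Archimedean[of "r/2"] r(1) obtain m where "inverse (real (Suc m)) < r/2" by auto
      then have "1 / real (Suc m) < r/2" by (simp only: inverse_eq_divide)
      then show ?thesis by (rule that)
    qed
    have "w \<in> X" using w Q by auto
    then obtain c where c: "c \<in> K m" "dist c w < 1 / real (Suc m)" using K[of m] by (auto simp: dist_commute)
    have "X \<inter> ball c (1 / real (Suc m)) \<subseteq> W"
    proof
      fix z assume z: "z \<in> X \<inter> ball c (1 / real (Suc m))"
      have "dist w z \<le> dist w c + dist c z" by (rule dist_triangle)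
      also have "\<dots> < r" using z c m by (simp add: dist_commute)
      finally show "z \<in> W" using z r Q by auto
    qed
    moreover have "X \<inter> ball c (1 / real (Suc m)) \<in> B" using c unfolding B_def by blast
    ultimately show ?thesis by blast
  qed
  define G where "G = (\<lambda>(b,c). {x\<in>X. \<exists>i\<in>S_T T b \<delta>. (T^^i) x \<in> c})"
  have Gop: "openin (top_of_set X) (G (b,c))" if "c \<in> B" for b c
  proof -
    have eq: "G (b,c) = \<Union>((\<lambda>i. X \<inter> (T^^i) -` c) ` S_T T b \<delta>)" by (auto simp: G_def)
    have op: "openin (top_of_set X) (X \<inter> (T^^i) -` c)" for i
      using funpow_openin[OF cT sT] Bop[OF that] by (auto simp: opene_def)
    have "openin (top_of_set X) (\<Union>((\<lambda>i. X \<inter> (T^^i) -` c) ` S_T T b \<delta>))"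
      using op by (intro openin_Union) blast
    then show ?thesis using eq by (simp only:)
  qed
  have Gd: "X \<subseteq> closure (G (b,c))" if bcB: "b \<in> B" "c \<in> B" for b c
  proof
    fix y assume y: "y \<in> X"
    show "y \<in> closure (G (b,c))" unfolding closure_approachable
    proof (intro allI impI)
      fix e :: real assume e: "e > 0"
      have "opene X (X \<inter> ball y e)" using y e by (auto simp: opene_def openin_open_Int)
      then obtain n where n: "n \<in> S_T T b \<delta>" "n \<in> N_T T (X \<inter> ball y e) c"
        using ts Bop[OF bcB(1)] Bop[OF bcB(2)] by blast
      then obtain u where u: "u \<in> X \<inter> ball y e" "(T^^n) u \<in> c" unfolding N_T_def by blast
      then have "u \<in> G (b,c)" using n by (auto simp: G_def)
      then show "\<exists>z\<in>G (b,c). dist z y < e" using u by (auto simp: dist_commute)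
    qed
  qed
  define C where "C = insert X (G ` (B \<times> B))"
  define X0 where "X0 = \<Inter>C"
  have cC: "countable C" unfolding C_def using cB by auto
  have Cop: "openin (top_of_set X) S" if "S \<in> C" for S
    using that Gop by (auto simp: C_def)
  have Csub: "S \<subseteq> X" if "S \<in> C" for S using Cop[OF that] by (rule openin_imp_subset)
  have X0X: "X0 \<subseteq> X" by (auto simp: X0_def C_def)
  have Cd: "(top_of_set X) closure_of S = topspace (top_of_set X)" if "S \<in> C" for S
  proof -
    have "X \<subseteq> closure S" using that Gd closure_subset[of X] by (auto simp: C_def)
    then show ?thesis using Csub[OF that] by (auto simp: closure_of_subtopology Int_absorb1)
  qed
  have "compact_space (top_of_set X)"
    using cX by (simp add: compact_space_subtopology)
  then have lc: "locally_compact_space (top_of_set X)" by (rule compact_imp_locally_compact_space)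
  have rg: "regular_space (top_of_set X)"
    using regular_space_euclidean regular_space_subtopology by auto
  note lc rg
  then have "(top_of_set X) closure_of X0 = topspace (top_of_set X)"
    unfolding X0_def using Baire_category[of "top_of_set X" C] cC Cop Cd by blast
  then have "X \<inter> closure (X \<inter> X0) = X" by (simp add: closure_of_subtopology)
  moreover have "X \<inter> X0 = X0" using X0X by blast
  ultimately have "X \<inter> closure X0 = X" by simp
  then have dense: "X \<subseteq> closure X0" by blast
  have "(countable intersection_of openin (top_of_set X)) (\<Inter>C)"
    by (rule countable_intersection_of_Inter[OF cC]) (rule countable_intersection_of_inc, rule Cop)
  then have gd: "gdelta_in (top_of_set X) X0"
    unfolding gdelta_in_alt using X0X by (simp add: X0_def)
  have good: "\<forall>W V. opene X W \<longrightarrow> opene X V \<longrightarrow> (\<exists>i\<in>S_T T W \<delta>. (T^^i) x \<in> V)" if x: "x \<in> X0" for x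
  proof (intro allI impI)
    fix W V assume WV: "opene X W" "opene X V"
    obtain b where b: "b \<in> B" "b \<subseteq> W" using Bbase[OF WV(1)] by blast
    obtain c where c: "c \<in> B" "c \<subseteq> V" using Bbase[OF WV(2)] by blast
    have bc: "b \<in> B" "c \<in> B" "b \<subseteq> W" "c \<subseteq> V" using b c by auto
    then have "x \<in> G (b,c)" using x by (auto simp: X0_def C_def)
    then obtain i where "i \<in> S_T T b \<delta>" "(T^^i) x \<in> c" by (auto simp: G_def)
    moreover have "S_T T b \<delta> \<subseteq> S_T T W \<delta>" using bc by (auto simp: S_T_def)
    ultimately show "\<exists>i\<in>S_T T W \<delta>. (T^^i) x \<in> V" using bc by blast
  qed
  show ?thesis using X0X dense gd good by blast
qed


theorem proposition4p3:
  fixes X :: "'a::metric_space set" and T :: "'a \<Rightarrow> 'a"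
  assumes "compact X"
    and "\<exists>x\<in>X. \<exists>y\<in>X. x \<noteq> y"
    and "\<forall>x\<in>X. x islimpt X"
    and "continuous_on X T"
    and "T ` X = X"
  shows "(\<forall>\<delta>>0. plus_invariant (S_fam X T \<delta>))
    \<and> (transitively_sensitive X T \<longleftrightarrow>
         (\<exists>\<delta>>0. \<exists>X0. X0 \<subseteq> X \<and> X \<subseteq> closure X0 \<and> gdelta_in (top_of_set X) X0
              \<and> (\<forall>x\<in>X0. omega_F T (S_fam X T \<delta>) x = X)))
    \<and> ((\<exists>\<delta>>0. \<exists>X0. X0 \<subseteq> X \<and> X \<subseteq> closure X0 \<and> gdelta_in (top_of_set X) X0
              \<and> (\<forall>x\<in>X0. omega_F T (S_fam X T \<delta>) x = X)) \<longleftrightarrow>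
       (\<exists>\<delta>>0. \<exists>x\<in>X. omega_F T (S_fam X T \<delta>) x = X))"
proof -
  note cX = assms(1) and cT = assms(4) and sT = assms(5)
  have ne: "X \<noteq> {}" using assms(2) by blast
  have P1: "\<forall>\<delta>>0. plus_invariant (S_fam X T \<delta>)"
    unfolding plus_invariant_def
  proof (intro allI impI)
    fix \<delta> :: real and i F assume d: "\<delta> > 0" and F: "F \<in> S_fam X T \<delta>"
    then obtain U where U: "opene X U" "S_T T U \<delta> \<subseteq> F" by (auto simp: S_fam_def)
    obtain W' where W': "opene X W'" "S_T T W' \<delta> \<subseteq> (\<lambda>j. i + j) ` S_T T U \<delta>"
      using shift[OF cT sT U(1) d] by blast
    then have "S_T T W' \<delta> \<subseteq> (\<lambda>j. i + j) ` F" using U(2) by blast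
    then show "(\<lambda>j. i + j) ` F \<in> S_fam X T \<delta>" using W'(1) by (auto simp: S_fam_def)
  qed
  let ?G = "\<lambda>\<delta>. \<exists>X0. X0 \<subseteq> X \<and> X \<subseteq> closure X0 \<and> gdelta_in (top_of_set X) X0
              \<and> (\<forall>x\<in>X0. omega_F T (S_fam X T \<delta>) x = X)"
  have A: "\<exists>\<delta>>0. ?G \<delta>" if "transitively_sensitive X T"
  proof -
    from that obtain \<delta> where d: "\<delta> > 0" and ts: "\<forall>U V W. opene X U \<longrightarrow> opene X V \<longrightarrow> opene X W \<longrightarrow>
      S_T T W \<delta> \<inter> N_T T U V \<noteq> {}" unfolding transitively_sensitive_def by blast
    obtain X0 where X0: "X0 \<subseteq> X" "X \<subseteq> closure X0" "gdelta_in (top_of_set X) X0"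
      "\<forall>x\<in>X0. \<forall>W V. opene X W \<longrightarrow> opene X V \<longrightarrow> (\<exists>i\<in>S_T T W \<delta>. (T^^i) x \<in> V)"
      using ts_imp_dense[OF cX cT sT ne ts] by blast
    have "\<forall>x\<in>X0. omega_F T (S_fam X T \<delta>) x = X"
      using X0(1,4) omega_iff[OF cX sT] by blast
    then show ?thesis using d X0 by blast
  qed
  have B: "\<exists>\<delta>>0. \<exists>x\<in>X. omega_F T (S_fam X T \<delta>) x = X" if "\<exists>\<delta>>0. ?G \<delta>"
  proof -
    from that obtain \<delta> X0 where d: "\<delta> > 0" and X0: "X0 \<subseteq> X" "X \<subseteq> closure X0"
      "\<forall>x\<in>X0. omega_F T (S_fam X T \<delta>) x = X" by blast
    have "X0 \<noteq> {}" using X0(2) ne by auto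
    then show ?thesis using d X0 by blast
  qed
  have C: "transitively_sensitive X T" if "\<exists>\<delta>>0. \<exists>x\<in>X. omega_F T (S_fam X T \<delta>) x = X"
  proof -
    from that obtain \<delta> x where d: "\<delta> > 0" and x: "x \<in> X" and om: "omega_F T (S_fam X T \<delta>) x = X"
      by blast
    have good: "\<forall>W V. opene X W \<longrightarrow> opene X V \<longrightarrow> (\<exists>i\<in>S_T T W \<delta>. (T^^i) x \<in> V)"
      using omega_iff[OF cX sT x] om by blast
    have "opene X X" using ne by (simp add: opene_def)
    have "S_T T W \<delta> \<inter> N_T T U V \<noteq> {}" if U: "opene X U" and V: "opene X V" and W: "opene X W" for U V W
    proof -
      obtain m where m: "(T^^m) x \<in> U" using good \<open>opene X X\<close> U by blast
      obtain W' where W': "opene X W'" "S_T T W' \<delta> \<subseteq> (\<lambda>j. m + j) ` S_T T W \<delta>"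
        using shift[OF cT sT W d] by blast
      obtain k where k: "k \<in> S_T T W' \<delta>" "(T^^k) x \<in> V" using good W' V by blast
      then obtain n where n: "n \<in> S_T T W \<delta>" "k = m + n" using W'(2) by blast
      have "(T^^n) ((T^^m) x) = (T^^k) x" using n(2) funpow_add[of n m T] by (simp add: add.commute)
      then have "(T^^m) x \<in> U \<inter> (T^^n) -` V" using m k by simp
      then have "n \<in> N_T T U V" by (auto simp: N_T_def)
      then show ?thesis using n by blast
    qed
    then show ?thesis unfolding transitively_sensitive_def using d by blast
  qed
  show ?thesis using P1 A B C by blast
qed

end
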